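(* There is no SLCS formula $\varphi$ such that for every topological neighbourhood model $\mathcal M$ with underlying space $(X,\mathcal N)$: $(X,\mathcal N)$ is $T_1$-separated if and only if $\mathcal M,x\models\varphi$ for every $x\in X$. (Concretely: for an uncountable set $X$ with the countable complement topology and any valuation $V_1$, and the space $X'=X\cup\{x'\mid x\in X\}$ obtained by doubling every point, with the double pointed countable complement topology and valuation $V_2(x)=V_2(x')=V_1(x)$, there is a path preserving bisimulation between the two topological models whose point relation relates each $x$ to both $x$ and $x'$; the first model is $T_1$-separated, the second is not.)
   Context: A neighbourhood space $(X,\mathcal N)$ assigns to each $x\in X$ a filter $\mathcal N(x)$ on $X$ (closed under finite intersections and supersets, not containing $\emptyset$) such that $x\in N$ for all $N\in\mathcal N(x)$. Closure: $\mathcal C(A)=\{x\mid\forall N\in\mathcal N(x): A\cap N\neq\emptyset\}$. It is topological if for every $x$ and $N\in\mathcal N(x)$ there is $M\in\mathcal N(x)$ with $N\in\mathcal N(y)$ for all $y\in M$ (equivalently, the neighbourhood filters of a topology). A topological neighbourhood model is $\mathcal M=((X,\mathcal N),\mathbb R,V)$ with $(X,\mathcal N)$ topological, index space the reals with the standard topology, standard order and $0$, and valuation $V:X\to\mathcal P(\mathsf P)$ for a fixed countable set $\mathsf P$ of atoms. A path is a continuous map $p:\mathbb R\to X$ (continuity: $p^{-1}[N]$ is a neighbourhood of $t$ for every neighbourhood $N$ of $p(t)$). The countable complement topology on uncountable $X$: $\mathcal N(x)=\{N\mid \exists Y\,(x\in Y\subseteq N,\ X\setminus Y \text{ countable})\}$.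 The double pointed version on $X'$: same with $Y$ ranging over doublings $Y\cup\{y'\mid y\in Y\}$ of such sets. The space is $T_1$-separated if $\{x\}\cap\mathcal C(\{y\})=\mathcal C(\{x\})\cap\{y\}=\emptyset$ for all distinct $x,y$. SLCS formulas: $\varphi::=a\mid\top\mid\neg\varphi\mid\varphi\wedge\varphi\mid\mathcal N\varphi\mid\varphi\,\mathcal R\,\varphi\mid\varphi\,\mathcal P\,\varphi$ with $a\in\mathsf P$. Semantics: $\mathcal M,x\models a$ iff $a\in V(x)$; Booleans as usual; $\mathcal M,x\models\mathcal N\varphi$ iff $x\in\mathcal C(\{y\mid\mathcal M,y\models\varphi\})$; $\mathcal M,x\models\varphi\,\mathcal R\,\psi$ iff there are a path $p$ and $n$ with $p(n)=x$, $\mathcal M,p(0)\models\psi$ and $\mathcal M,p(i)\models\varphi$ for all $0<i\le n$; $\mathcal M,x\models\varphi\,\mathcal P\,\psi$ iff there are a path $p$ with $p(0)=x$ and $n$ with $\mathcal M,p(n)\models\psi$ and $\mathcal M,p(i)\models\varphi$ for all $0\le i<n$. Path preserving bisimulation: for models $\mathcal M_1,\mathcal M_2$ over the same index space with path sets $\mathcal P_1,\mathcal P_2$, a triple $(Z_{\mathcal N},Z_1,Z_2)$, $\emptyset\ne Z_{\mathcal N}\subseteq X_1\times X_2$, $Z_1\subseteq(\mathcal P_1\times I)\times(\mathcal P_2\times I)$, $Z_2\subseteq(\mathcal P_2\times I)\times(\mathcal P_1\times I)$, such that: (1) at each pair $x_1Z_{\mathcal N}x_2$: $V_1(x_1)=V_2(x_2)$;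 for every $N_2\in\mathcal N_2(x_2)$ there is $N_1\in\mathcal N_1(x_1)$ with every $y_1\in N_1$ related to some $y_2\in N_2$; and symmetrically for every $N_1\in\mathcal N_1(x_1)$; (2) if $x_1Z_{\mathcal N}x_2$, $p(0)=x_1$, $n\ne0$, there are $q$ with $q(0)=x_2$ and $m$ with $p(n)Z_{\mathcal N}q(m)$, $(p,n)Z_1(q,m)$; (3) if $x_1Z_{\mathcal N}x_2$, $p(n)=x_1$, $n\ne0$, there are $q,m$ with $q(m)=x_2$, $p(0)Z_{\mathcal N}q(0)$, $(p,n)Z_1(q,m)$; (4) if $(p,n)Z_1(q,m)$ and $0<k_q<m$, there is $0<k_p<n$ with $p(k_p)Z_{\mathcal N}q(k_q)$; (5) if $x_1Z_{\mathcal N}x_2$, $q(0)=x_2$, $m\ne0$, there are $p$ with $p(0)=x_1$ and $n$ with $p(n)Z_{\mathcal N}q(m)$, $(q,m)Z_2(p,n)$; (6) if $x_1Z_{\mathcal N}x_2$, $q(m)=x_2$, $m\neq0$, there are $p,n$ with $p(n)=x_1$, $p(0)Z_{\mathcal N}q(0)$, $(q,m)Z_2(p,n)$; (7) if $(q,m)Z_2(p,n)$ and $0<k_p<n$, there is $0<k_q<m$ with $p(k_p)Z_{\mathcal N}q(k_q)$. *)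

theory Defs
  imports "HOL-Analysis.Analysis"
begin

text \<open>Atoms are natural numbers (a fixed countable set of atoms); a valuation is V :: 'a => nat set.\<close>

definition filter_on :: "'a set \<Rightarrow> 'a set set \<Rightarrow> bool" where
  "filter_on X F \<longleftrightarrow> F \<noteq> {} \<and> F \<subseteq> Pow X \<and> {} \<notin> F \<and>
     (\<forall>A\<in>F. \<forall>B\<in>F. A \<inter> B \<in> F) \<and> (\<forall>A\<in>F. \<forall>B. A \<subseteq> B \<and> B \<subseteq> X \<longrightarrow> B \<in> F)"

definition nbh_space :: "'a set \<Rightarrow> ('a \<Rightarrow> 'a set set) \<Rightarrow> bool" where
  "nbh_space X Nb \<longleftrightarrow> (\<forall>x\<in>X. filter_on X (Nb x) \<and> (\<forall>N\<in>Nb x. x \<in> N))"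

definition topological_nbh :: "'a set \<Rightarrow> ('a \<Rightarrow> 'a set set) \<Rightarrow> bool" where
  "topological_nbh X Nb \<longleftrightarrow> nbh_space X Nb \<and>
     (\<forall>x\<in>X. \<forall>N\<in>Nb x. \<exists>M\<in>Nb x. \<forall>y\<in>M. N \<in> Nb y)"

definition nclosure :: "'a set \<Rightarrow> ('a \<Rightarrow> 'a set set) \<Rightarrow> 'a set \<Rightarrow> 'a set" where
  "nclosure X Nb A = {x\<in>X. \<forall>N\<in>Nb x. A \<inter> N \<noteq> {}}"

definition T1_sep :: "'a set \<Rightarrow> ('a \<Rightarrow> 'a set set) \<Rightarrow> bool" where
  "T1_sep X Nb \<longleftrightarrow> (\<forall>x\<in>X. \<forall>y\<in>X. x \<noteq> y \<longrightarrow>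
      {x} \<inter> nclosure X Nb {y} = {} \<and> nclosure X Nb {x} \<inter> {y} = {})"

definition npath :: "'a set \<Rightarrow> ('a \<Rightarrow> 'a set set) \<Rightarrow> (real \<Rightarrow> 'a) \<Rightarrow> bool" where
  "npath X Nb p \<longleftrightarrow> range p \<subseteq> X \<and>
     (\<forall>t. \<forall>N\<in>Nb (p t). \<exists>U. open U \<and> t \<in> U \<and> U \<subseteq> p -` N)"

datatype slcs = Atom nat | Top | Neg slcs | Conj slcs slcs | Near slcs
  | Reach slcs slcs | Pass slcs slcs

primrec sem :: "'a set \<Rightarrow> ('a \<Rightarrow> 'a set set) \<Rightarrow> ('a \<Rightarrow> nat set) \<Rightarrow> slcs \<Rightarrow> 'a set" where
  "sem X Nb V (Atom a) = {x\<in>X. a \<in> V x}"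
| "sem X Nb V Top = X"
| "sem X Nb V (Neg \<phi>) = X - sem X Nb V \<phi>"
| "sem X Nb V (Conj \<phi> \<psi>) = sem X Nb V \<phi> \<inter> sem X Nb V \<psi>"
| "sem X Nb V (Near \<phi>) = nclosure X Nb (sem X Nb V \<phi>)"
| "sem X Nb V (Reach \<phi> \<psi>) = {x\<in>X. \<exists>p n. npath X Nb p \<and> p n = x \<and> p 0 \<in> sem X Nb V \<psi> \<and>
       (\<forall>i. 0 < i \<and> i \<le> n \<longrightarrow> p i \<in> sem X Nb V \<phi>)}"
| "sem X Nb V (Pass \<phi> \<psi>) = {x\<in>X. \<exists>p n. npath X Nb p \<and> p 0 = x \<and> p n \<in> sem X Nb V \<psi> \<and>
       (\<forall>i. 0 \<le> i \<and> i < n \<longrightarrow> p i \<in> sem X Nb V \<phi>)}"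

text \<open>Countable complement topology and its double pointed version on X \<times> UNIV
  (x is (x,False), x' is (x,True)).\<close>
definition ccc_nbh :: "'a set \<Rightarrow> 'a \<Rightarrow> 'a set set" where
  "ccc_nbh X x = {N. N \<subseteq> X \<and> (\<exists>Y. x \<in> Y \<and> Y \<subseteq> N \<and> countable (X - Y))}"

definition dccc_nbh :: "'a set \<Rightarrow> 'a \<times> bool \<Rightarrow> ('a \<times> bool) set set" where
  "dccc_nbh X z = {N. N \<subseteq> X \<times> UNIV \<and>
      (\<exists>Y. fst z \<in> Y \<and> Y \<times> UNIV \<subseteq> N \<and> countable (X - Y))}"

text \<open>Path preserving bisimulation (conditions (1)-(7)); path sets are all paths.\<close>
definition pp_bisim ::
  "'a set \<Rightarrow> ('a \<Rightarrow> 'a set set) \<Rightarrow> ('a \<Rightarrow> nat set) \<Rightarrow>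
   'b set \<Rightarrow> ('b \<Rightarrow> 'b set set) \<Rightarrow> ('b \<Rightarrow> nat set) \<Rightarrow>
   ('a \<times> 'b) set \<Rightarrow> (((real \<Rightarrow> 'a) \<times> real) \<times> ((real \<Rightarrow> 'b) \<times> real)) set \<Rightarrow>
   (((real \<Rightarrow> 'b) \<times> real) \<times> ((real \<Rightarrow> 'a) \<times> real)) set \<Rightarrow> bool" where
  "pp_bisim X1 N1 V1 X2 N2 V2 ZN Z1 Z2 \<longleftrightarrow>
     ZN \<noteq> {} \<and> ZN \<subseteq> X1 \<times> X2 \<and>
     (\<forall>((p,n),(q,m))\<in>Z1. npath X1 N1 p \<and> npath X2 N2 q) \<and>
     (\<forall>((q,m),(p,n))\<in>Z2. npath X2 N2 q \<and> npath X1 N1 p) \<and>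
     (\<forall>(x1,x2)\<in>ZN. V1 x1 = V2 x2 \<and>
        (\<forall>M2\<in>N2 x2. \<exists>M1\<in>N1 x1. \<forall>y1\<in>M1. \<exists>y2\<in>M2. (y1,y2) \<in> ZN) \<and>
        (\<forall>M1\<in>N1 x1. \<exists>M2\<in>N2 x2. \<forall>y2\<in>M2. \<exists>y1\<in>M1. (y1,y2) \<in> ZN)) \<and>
     (\<forall>(x1,x2)\<in>ZN. \<forall>p n. npath X1 N1 p \<and> p 0 = x1 \<and> n \<noteq> 0 \<longrightarrow>
        (\<exists>q m. npath X2 N2 q \<and> q 0 = x2 \<and> (p n, q m) \<in> ZN \<and> ((p,n),(q,m)) \<in> Z1)) \<and>
     (\<forall>(x1,x2)\<in>ZN. \<forall>p n. npath X1 N1 p \<and> p n = x1 \<and> n \<noteq> 0 \<longrightarrow>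
        (\<exists>q m. npath X2 N2 q \<and> q m = x2 \<and> (p 0, q 0) \<in> ZN \<and> ((p,n),(q,m)) \<in> Z1)) \<and>
     (\<forall>p n q m kq. ((p,n),(q,m)) \<in> Z1 \<and> 0 < kq \<and> kq < m \<longrightarrow>
        (\<exists>kp. 0 < kp \<and> kp < n \<and> (p kp, q kq) \<in> ZN)) \<and>
     (\<forall>(x1,x2)\<in>ZN. \<forall>q m. npath X2 N2 q \<and> q 0 = x2 \<and> m \<noteq> 0 \<longrightarrow>
        (\<exists>p n. npath X1 N1 p \<and> p 0 = x1 \<and> (p n, q m) \<in> ZN \<and> ((q,m),(p,n)) \<in> Z2)) \<and>
     (\<forall>(x1,x2)\<in>ZN. \<forall>q m. npath X2 N2 q \<and> q m = x2 \<and> m \<noteq> 0 \<longrightarrow>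
        (\<exists>p n. npath X1 N1 p \<and> p n = x1 \<and> (p 0, q 0) \<in> ZN \<and> ((q,m),(p,n)) \<in> Z2)) \<and>
     (\<forall>q m p n kp. ((q,m),(p,n)) \<in> Z2 \<and> 0 < kp \<and> kp < n \<longrightarrow>
        (\<exists>kq. 0 < kq \<and> kq < m \<and> (p kp, q kq) \<in> ZN))"

end

theory Submission
  imports Defs
begin

fun fv :: "slcs \<Rightarrow> bool" where
  "fv (Atom a) = False"
| "fv Top = True"
| "fv (Neg \<phi>) = (\<not> fv \<phi>)"
| "fv (Conj \<phi> \<psi>) = (fv \<phi> \<and> fv \<psi>)"
| "fv (Near \<phi>) = fv \<phi>"
| "fv (Reach \<phi> \<psi>) = fv \<psi>"
| "fv (Pass \<phi> \<psi>) = fv \<psi>"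

lemma npath_indisc: "npath X (\<lambda>_. {X}) p \<longleftrightarrow> range p \<subseteq> X"
  unfolding npath_def by (auto intro: exI[of _ UNIV])

lemma sem_indisc:
  assumes "X \<noteq> {}"
  shows "sem X (\<lambda>_. {X}) (\<lambda>_. {}) \<phi> = (if fv \<phi> then X else {})"
proof (induction \<phi>)
  case (Near \<phi>)
  then show ?case using assms by (auto simp: nclosure_def)
next
  case (Reach \<phi> \<psi>)
  show ?case
  proof (cases "fv \<psi>")
    case True
    { fix x assume "x \<in> X"
      hence "npath X (\<lambda>_. {X}) (\<lambda>_. x)" by (auto simp: npath_indisc)
      hence "\<exists>p n. npath X (\<lambda>_. {X}) p \<and> p n = x \<and> p 0 \<in> sem X (\<lambda>_. {X}) (\<lambda>_. {}) \<psi> \<and>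
       (\<forall>i. 0 < i \<and> i \<le> n \<longrightarrow> p i \<in> sem X (\<lambda>_. {X}) (\<lambda>_. {}) \<phi>)"
        using True Reach \<open>x \<in> X\<close> by (intro exI[of _ "\<lambda>_. x"] exI[of _ 0]) auto }
    then show ?thesis using True by auto
  next
    case False
    then show ?thesis using Reach by auto
  qed
next
  case (Pass \<phi> \<psi>)
  show ?case
  proof (cases "fv \<psi>")
    case True
    { fix x assume "x \<in> X"
      hence "npath X (\<lambda>_. {X}) (\<lambda>_. x)" by (auto simp: npath_indisc)
      hence "\<exists>p n. npath X (\<lambda>_. {X}) p \<and> p 0 = x \<and> p n \<in> sem X (\<lambda>_. {X}) (\<lambda>_. {}) \<psi> \<and>
       (\<forall>i. 0 \<le> i \<and> i < n \<longrightarrow> p i \<in> sem X (\<lambda>_. {X}) (\<lambda>_. {}) \<phi>)"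
        using True Pass \<open>x \<in> X\<close> by (intro exI[of _ "\<lambda>_. x"] exI[of _ 0]) auto }
    then show ?thesis using True by auto
  next
    case False
    then show ?thesis using Pass by auto
  qed
qed auto

lemma top_indisc: "X \<noteq> {} \<Longrightarrow> topological_nbh X (\<lambda>_. {X})"
  unfolding topological_nbh_def nbh_space_def filter_on_def by auto

lemma part1:
  fixes a b :: 'a
  assumes "a \<noteq> b"
  shows "\<not> (\<exists>\<phi>. \<forall>(X :: 'a set) Nb V. topological_nbh X Nb \<longrightarrow>
              (T1_sep X Nb \<longleftrightarrow> (\<forall>x\<in>X. x \<in> sem X Nb V \<phi>)))"
proof
  assume "\<exists>\<phi>. \<forall>(X :: 'a set) Nb V. topological_nbh X Nb \<longrightarrow>
              (T1_sep X Nb \<longleftrightarrow> (\<forall>x\<in>X. x \<in> sem X Nb V \<phi>))"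
  then obtain \<phi> where h: "\<And>(X :: 'a set) Nb V. topological_nbh X Nb \<Longrightarrow>
              (T1_sep X Nb \<longleftrightarrow> (\<forall>x\<in>X. x \<in> sem X Nb V \<phi>))" by blast
  have t1: "T1_sep {a} (\<lambda>_. {{a}})" by (auto simp: T1_sep_def)
  have nt1: "\<not> T1_sep {a,b} (\<lambda>_. {{a,b}})" using assms
    by (auto simp: T1_sep_def nclosure_def)
  from h[OF top_indisc, of "{a}" "\<lambda>_. {}"] t1 have "fv \<phi>"
    by (simp add: sem_indisc split: if_splits)
  moreover from h[OF top_indisc, of "{a,b}" "\<lambda>_. {}"] nt1 have "\<not> fv \<phi>"
    by (auto simp add: sem_indisc split: if_splits)
  ultimately show False by simp
qed

lemma top_ccc: "topological_nbh X (ccc_nbh X)"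
proof -
  { fix x assume x: "x \<in> X"
  have "ccc_nbh X x \<noteq> {}" using x by (auto simp: ccc_nbh_def intro!: exI[of _ X])
  moreover have "ccc_nbh X x \<subseteq> Pow X" by (auto simp: ccc_nbh_def)
  moreover have "{} \<notin> ccc_nbh X x" by (auto simp: ccc_nbh_def)
  moreover have "\<forall>A\<in>ccc_nbh X x. \<forall>B\<in>ccc_nbh X x. A \<inter> B \<in> ccc_nbh X x"
  proof (intro ballI)
    fix A B assume "A \<in> ccc_nbh X x" "B \<in> ccc_nbh X x"
    then obtain Y1 Y2 where "x \<in> Y1" "Y1 \<subseteq> A" "countable (X - Y1)" "x \<in> Y2" "Y2 \<subseteq> B"
      "countable (X - Y2)" "A \<subseteq> X" by (auto simp: ccc_nbh_def)
    moreover have "X - (Y1 \<inter> Y2) = (X - Y1) \<union> (X - Y2)" by auto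
    ultimately show "A \<inter> B \<in> ccc_nbh X x" unfolding ccc_nbh_def
      by (intro CollectI conjI exI[of _ "Y1 \<inter> Y2"]) auto
  qed
  moreover have "\<forall>A\<in>ccc_nbh X x. \<forall>B. A \<subseteq> B \<and> B \<subseteq> X \<longrightarrow> B \<in> ccc_nbh X x"
    by (auto simp: ccc_nbh_def)
  moreover have "\<forall>N\<in>ccc_nbh X x. x \<in> N" by (auto simp: ccc_nbh_def)
  moreover have "\<forall>N\<in>ccc_nbh X x. \<exists>M\<in>ccc_nbh X x. \<forall>y\<in>M. N \<in> ccc_nbh X y"
  proof
    fix N assume N: "N \<in> ccc_nbh X x"
    then obtain Y where "x \<in> Y" "Y \<subseteq> N" "countable (X - Y)" "N \<subseteq> X" by (auto simp: ccc_nbh_def)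
    hence "countable (X - N)" by (meson Diff_mono countable_subset order_refl)
    hence "\<forall>y\<in>N. N \<in> ccc_nbh X y" using \<open>N \<subseteq> X\<close> by (auto simp: ccc_nbh_def)
    thus "\<exists>M\<in>ccc_nbh X x. \<forall>y\<in>M. N \<in> ccc_nbh X y" using N by blast
  qed
  ultimately have "filter_on X (ccc_nbh X x) \<and> (\<forall>N\<in>ccc_nbh X x. x \<in> N) \<and> (\<forall>N\<in>ccc_nbh X x. \<exists>M\<in>ccc_nbh X x. \<forall>y\<in>M. N \<in> ccc_nbh X y)"
    unfolding filter_on_def by blast }
  thus ?thesis unfolding topological_nbh_def nbh_space_def by blast
qed

lemma top_dccc: "topological_nbh (X \<times> UNIV) (dccc_nbh X)"
proof -
  { fix z assume z: "z \<in> X \<times> (UNIV::bool set)"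
  have "dccc_nbh X z \<noteq> {}" using z by (auto simp: dccc_nbh_def intro!: exI[of _ X])
  moreover have "dccc_nbh X z \<subseteq> Pow (X \<times> UNIV)" by (auto simp: dccc_nbh_def)
  moreover have "{} \<notin> dccc_nbh X z" by (auto simp: dccc_nbh_def)
  moreover have "\<forall>A\<in>dccc_nbh X z. \<forall>B\<in>dccc_nbh X z. A \<inter> B \<in> dccc_nbh X z"
  proof (intro ballI)
    fix A B assume "A \<in> dccc_nbh X z" "B \<in> dccc_nbh X z"
    then obtain Y1 Y2 where "fst z \<in> Y1" "Y1 \<times> UNIV \<subseteq> A" "countable (X - Y1)" "fst z \<in> Y2"
      "Y2 \<times> UNIV \<subseteq> B" "countable (X - Y2)" "A \<subseteq> X \<times> UNIV" by (auto simp: dccc_nbh_def)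
    moreover have "X - (Y1 \<inter> Y2) = (X - Y1) \<union> (X - Y2)" by auto
    ultimately show "A \<inter> B \<in> dccc_nbh X z" unfolding dccc_nbh_def
      by (intro CollectI conjI exI[of _ "Y1 \<inter> Y2"]) auto
  qed
  moreover have "\<forall>A\<in>dccc_nbh X z. \<forall>B. A \<subseteq> B \<and> B \<subseteq> X \<times> UNIV \<longrightarrow> B \<in> dccc_nbh X z"
    by (auto simp: dccc_nbh_def)
  moreover have "\<forall>N\<in>dccc_nbh X z. z \<in> N"
  proof
    fix N assume "N \<in> dccc_nbh X z"
    then obtain Y where "fst z \<in> Y" "Y \<times> UNIV \<subseteq> N" by (auto simp: dccc_nbh_def)
    thus "z \<in> N" by (metis UNIV_I mem_Sigma_iff prod.collapse subsetD)
  qed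
  moreover have "\<forall>N\<in>dccc_nbh X z. \<exists>M\<in>dccc_nbh X z. \<forall>y\<in>M. N \<in> dccc_nbh X y"
  proof
    fix N assume N: "N \<in> dccc_nbh X z"
    then obtain Y where Y: "fst z \<in> Y" "Y \<times> UNIV \<subseteq> N" "countable (X - Y)" "N \<subseteq> X \<times> UNIV"
      by (auto simp: dccc_nbh_def)
    have "X - (Y \<inter> X) = X - Y" by auto
    hence "(Y \<inter> X) \<times> UNIV \<in> dccc_nbh X z" using Y z unfolding dccc_nbh_def
      by (intro CollectI conjI exI[of _ "Y \<inter> X"]) auto
    moreover have "\<forall>y\<in>(Y \<inter> X) \<times> UNIV. N \<in> dccc_nbh X y" using Y by (auto simp: dccc_nbh_def)
    ultimately show "\<exists>M\<in>dccc_nbh X z. \<forall>y\<in>M. N \<in> dccc_nbh X y" by blast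
  qed
  ultimately have "filter_on (X \<times> UNIV) (dccc_nbh X z) \<and> (\<forall>N\<in>dccc_nbh X z. z \<in> N) \<and> (\<forall>N\<in>dccc_nbh X z. \<exists>M\<in>dccc_nbh X z. \<forall>y\<in>M. N \<in> dccc_nbh X y)"
    unfolding filter_on_def by blast }
  thus ?thesis unfolding topological_nbh_def nbh_space_def by blast
qed

lemma T1_ccc: "T1_sep X (ccc_nbh X)"
proof -
  have "y \<notin> nclosure X (ccc_nbh X) {x}" if "x \<in> X" "y \<in> X" "x \<noteq> y" for x y
  proof -
    have "X - (X - {x}) = {x}" using that by auto
    hence "X - {x} \<in> ccc_nbh X y" using that unfolding ccc_nbh_def
      by (intro CollectI conjI exI[of _ "X - {x}"]) auto
    thus ?thesis by (auto simp: nclosure_def)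
  qed
  thus ?thesis unfolding T1_sep_def by blast
qed

lemma nT1_dccc: "X \<noteq> {} \<Longrightarrow> \<not> T1_sep (X \<times> UNIV) (dccc_nbh X)"
proof
  assume "X \<noteq> {}" "T1_sep (X \<times> UNIV) (dccc_nbh X)"
  then obtain x where x: "x \<in> X" by auto
  have "(x, False) \<in> nclosure (X \<times> UNIV) (dccc_nbh X) {(x, True)}"
    using x by (auto simp: nclosure_def dccc_nbh_def)
  moreover have "(x,True) \<in> X \<times> UNIV" "(x,False) \<in> X \<times> UNIV" "(x,True) \<noteq> (x,False)" using x by auto
  ultimately show False using \<open>T1_sep (X \<times> UNIV) (dccc_nbh X)\<close> unfolding T1_sep_def
    by (metis disjoint_iff singletonI)
qed

lemma path_lift:
  assumes "npath X (ccc_nbh X) p"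
  shows "npath (X \<times> UNIV) (dccc_nbh X) (\<lambda>t. (p t, b))"
  unfolding npath_def
proof (intro conjI allI ballI)
  show "range (\<lambda>t. (p t, b)) \<subseteq> X \<times> UNIV" using assms by (auto simp: npath_def)
  fix t N assume "N \<in> dccc_nbh X (p t, b)"
  then obtain Y where Y: "p t \<in> Y" "Y \<times> UNIV \<subseteq> N" "countable (X - Y)" by (auto simp: dccc_nbh_def)
  have "X - (Y \<inter> X) = X - Y" by auto
  hence "Y \<inter> X \<in> ccc_nbh X (p t)" using Y assms unfolding ccc_nbh_def npath_def
    by (intro CollectI conjI exI[of _ "Y \<inter> X"]) auto
  then obtain U where "open U" "t \<in> U" "U \<subseteq> p -` (Y \<inter> X)" using assms unfolding npath_def by blast
  thus "\<exists>U. open U \<and> t \<in> U \<and> U \<subseteq> (\<lambda>t. (p t, b)) -` N" using Y by blast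
qed

lemma path_proj:
  assumes "npath (X \<times> UNIV) (dccc_nbh X) q"
  shows "npath X (ccc_nbh X) (fst \<circ> q)"
  unfolding npath_def
proof (intro conjI allI ballI)
  show "range (fst \<circ> q) \<subseteq> X" using assms by (auto simp: npath_def)
  fix t N assume "N \<in> ccc_nbh X ((fst \<circ> q) t)"
  then obtain Y where Y: "fst (q t) \<in> Y" "Y \<subseteq> N" "countable (X - Y)" "N \<subseteq> X" by (auto simp: ccc_nbh_def)
  hence "(Y \<inter> X) \<times> UNIV \<in> dccc_nbh X (q t)" unfolding dccc_nbh_def
    by (intro CollectI conjI exI[of _ Y]) auto
  then obtain U where "open U" "t \<in> U" "U \<subseteq> q -` ((Y \<inter> X) \<times> UNIV)" using assms unfolding npath_def by blast
  moreover have "q -` ((Y \<inter> X) \<times> UNIV) \<subseteq> (fst \<circ> q) -` N" using Y by auto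
  ultimately show "\<exists>U. open U \<and> t \<in> U \<and> U \<subseteq> (fst \<circ> q) -` N" by blast
qed


lemma ZN_ball: "(\<And>x b. x \<in> X \<Longrightarrow> P x (x,b)) \<Longrightarrow> \<forall>(x1,x2)\<in>{(x,(x,b))|x b. x\<in>X}. P x1 x2"
  by auto

lemma bisim:
  assumes "X \<noteq> {}"
  shows "pp_bisim X (ccc_nbh X) V1 (X \<times> UNIV) (dccc_nbh X) (\<lambda>(x,b). V1 x)
            {(x, (x, b)) | x b. x \<in> X}
            {((p,n),((\<lambda>t. (p t, b)),n)) | p n b. npath X (ccc_nbh X) p}
            {((q,m),(fst \<circ> q,m)) | q m. npath (X \<times> UNIV) (dccc_nbh X) q}"
    (is "pp_bisim _ ?N1 _ _ ?N2 ?V2 ?ZN ?Z1 ?Z2")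
proof -
  have rng1: "p t \<in> X" if "npath X ?N1 p" for p t using that by (auto simp: npath_def)
  have rng2: "q t \<in> X \<times> UNIV" if "npath (X \<times> UNIV) ?N2 q" for q t using that by (auto simp: npath_def)
  have c0: "?ZN \<noteq> {} \<and> ?ZN \<subseteq> X \<times> (X \<times> UNIV)" using assms by auto
  have c1: "\<forall>((p,n),(q,m))\<in>?Z1. npath X ?N1 p \<and> npath (X \<times> UNIV) ?N2 q"
    using path_lift by fastforce
  have c2: "\<forall>((q,m),(p,n))\<in>?Z2. npath (X \<times> UNIV) ?N2 q \<and> npath X ?N1 p"
    using path_proj by fastforce
  have c3': "V1 x = ?V2 (x,b) \<and>
        (\<forall>M2\<in>?N2 (x,b). \<exists>M1\<in>?N1 x. \<forall>y1\<in>M1. \<exists>y2\<in>M2. (y1,y2) \<in> ?ZN) \<and>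
        (\<forall>M1\<in>?N1 x. \<exists>M2\<in>?N2 (x,b). \<forall>y2\<in>M2. \<exists>y1\<in>M1. (y1,y2) \<in> ?ZN)" if x: "x \<in> X" for x b
  proof -
    have A: "\<exists>M1\<in>?N1 x. \<forall>y1\<in>M1. \<exists>y2\<in>M2. (y1,y2) \<in> ?ZN" if M2h: "M2 \<in> ?N2 (x,b)" for M2
    proof -
      obtain Y where Y: "x \<in> Y" "Y \<times> UNIV \<subseteq> M2" "countable (X - Y)" using M2h by (auto simp: dccc_nbh_def)
      have "X - (Y \<inter> X) = X - Y" by auto
      hence "Y \<inter> X \<in> ?N1 x" using Y x unfolding ccc_nbh_def
        by (intro CollectI conjI exI[of _ "Y \<inter> X"]) auto
      moreover have "\<forall>y1\<in>Y \<inter> X. \<exists>y2\<in>M2. (y1,y2) \<in> ?ZN" using Y by blast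
      ultimately show ?thesis by blast
    qed
    have B: "\<exists>M2\<in>?N2 (x,b). \<forall>y2\<in>M2. \<exists>y1\<in>M1. (y1,y2) \<in> ?ZN" if M1h: "M1 \<in> ?N1 x" for M1
    proof -
      obtain Y where Y: "x \<in> Y" "Y \<subseteq> M1" "countable (X - Y)" "M1 \<subseteq> X" using M1h by (auto simp: ccc_nbh_def)
      have "Y \<times> UNIV \<in> ?N2 (x,b)" using Y unfolding dccc_nbh_def
        by (intro CollectI conjI exI[of _ Y]) auto
      moreover have "\<forall>y2\<in>Y \<times> UNIV. \<exists>y1\<in>M1. (y1,y2) \<in> ?ZN" using Y by blast
      ultimately show ?thesis by blast
    qed
    show "V1 x = ?V2 (x,b) \<and>
        (\<forall>M2\<in>?N2 (x,b). \<exists>M1\<in>?N1 x. \<forall>y1\<in>M1. \<exists>y2\<in>M2. (y1,y2) \<in> ?ZN) \<and>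
        (\<forall>M1\<in>?N1 x. \<exists>M2\<in>?N2 (x,b). \<forall>y2\<in>M2. \<exists>y1\<in>M1. (y1,y2) \<in> ?ZN)"
      using A B by simp
  qed
  have c3: "\<forall>(x1,x2)\<in>?ZN. V1 x1 = ?V2 x2 \<and>
        (\<forall>M2\<in>?N2 x2. \<exists>M1\<in>?N1 x1. \<forall>y1\<in>M1. \<exists>y2\<in>M2. (y1,y2) \<in> ?ZN) \<and>
        (\<forall>M1\<in>?N1 x1. \<exists>M2\<in>?N2 x2. \<forall>y2\<in>M2. \<exists>y1\<in>M1. (y1,y2) \<in> ?ZN)"
    by (rule ZN_ball) (rule c3')
  have c4': "\<exists>q m. npath (X \<times> UNIV) ?N2 q \<and> q 0 = (x,b) \<and> (p n, q m) \<in> ?ZN \<and> ((p,n),(q,m)) \<in> ?Z1"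
    if "x \<in> X" "npath X ?N1 p" "p 0 = x" for x b p and n :: real
    using that path_lift rng1 by (intro exI[of _ "\<lambda>t. (p t, b)"] exI[of _ n]) auto
  have c4: "\<forall>(x1,x2)\<in>?ZN. \<forall>p n. npath X ?N1 p \<and> p 0 = x1 \<and> n \<noteq> 0 \<longrightarrow>
        (\<exists>q m. npath (X \<times> UNIV) ?N2 q \<and> q 0 = x2 \<and> (p n, q m) \<in> ?ZN \<and> ((p,n),(q,m)) \<in> ?Z1)"
    by (rule ZN_ball, intro allI impI, elim conjE, rule c4') auto
  have c5': "\<exists>q m. npath (X \<times> UNIV) ?N2 q \<and> q m = (x,b) \<and> (p 0, q 0) \<in> ?ZN \<and> ((p,n),(q,m)) \<in> ?Z1"
    if "x \<in> X" "npath X ?N1 p" "p n = x" for x b p and n :: real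
    using that path_lift rng1 by (intro exI[of _ "\<lambda>t. (p t, b)"] exI[of _ n]) auto
  have c5: "\<forall>(x1,x2)\<in>?ZN. \<forall>p n. npath X ?N1 p \<and> p n = x1 \<and> n \<noteq> 0 \<longrightarrow>
        (\<exists>q m. npath (X \<times> UNIV) ?N2 q \<and> q m = x2 \<and> (p 0, q 0) \<in> ?ZN \<and> ((p,n),(q,m)) \<in> ?Z1)"
    by (rule ZN_ball, intro allI impI, elim conjE, rule c5') auto
  have c6: "\<forall>p n q m kq. ((p,n),(q,m)) \<in> ?Z1 \<and> 0 < kq \<and> kq < m \<longrightarrow>
        (\<exists>kp. 0 < kp \<and> kp < n \<and> (p kp, q kq) \<in> ?ZN)"
    using rng1 by blast
  have c7': "\<exists>p n. npath X ?N1 p \<and> p 0 = x \<and> (p n, q m) \<in> ?ZN \<and> ((q,m),(p,n)) \<in> ?Z2"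
    if "npath (X \<times> UNIV) ?N2 q" "q 0 = (x, b)" for x b q and m :: real
  proof -
    have "q m = (fst (q m), snd (q m))" by simp
    thus ?thesis using that path_proj rng2[of q m] by (intro exI[of _ "fst \<circ> q"] exI[of _ m]) force
  qed
  have c7: "\<forall>(x1,x2)\<in>?ZN. \<forall>q m. npath (X \<times> UNIV) ?N2 q \<and> q 0 = x2 \<and> m \<noteq> 0 \<longrightarrow>
        (\<exists>p n. npath X ?N1 p \<and> p 0 = x1 \<and> (p n, q m) \<in> ?ZN \<and> ((q,m),(p,n)) \<in> ?Z2)"
    by (rule ZN_ball, intro allI impI, elim conjE, rule c7') auto
  have c8': "\<exists>p n. npath X ?N1 p \<and> p n = x \<and> (p 0, q 0) \<in> ?ZN \<and> ((q,m),(p,n)) \<in> ?Z2"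
    if "npath (X \<times> UNIV) ?N2 q" "q m = (x, b)" for x b q and m :: real
  proof -
    have "q 0 = (fst (q 0), snd (q 0))" by simp
    thus ?thesis using that path_proj rng2[of q 0] by (intro exI[of _ "fst \<circ> q"] exI[of _ m]) force
  qed
  have c8: "\<forall>(x1,x2)\<in>?ZN. \<forall>q m. npath (X \<times> UNIV) ?N2 q \<and> q m = x2 \<and> m \<noteq> 0 \<longrightarrow>
        (\<exists>p n. npath X ?N1 p \<and> p n = x1 \<and> (p 0, q 0) \<in> ?ZN \<and> ((q,m),(p,n)) \<in> ?Z2)"
    by (rule ZN_ball, intro allI impI, elim conjE, rule c8') auto
  have c9': "(fst (q kp), q kp) \<in> ?ZN" if "npath (X \<times> UNIV) ?N2 q" for q and kp :: real
  proof -
    have "q kp = (fst (q kp), snd (q kp))" by simp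
    thus ?thesis using rng2[OF that, of kp] by force
  qed
  have c9: "\<forall>q m p n kp. ((q,m),(p,n)) \<in> ?Z2 \<and> 0 < kp \<and> kp < n \<longrightarrow>
        (\<exists>kq. 0 < kq \<and> kq < m \<and> (p kp, q kq) \<in> ?ZN)"
  proof (intro allI impI)
    fix q m p n and kp :: real
    assume h: "((q,m),(p,n)) \<in> ?Z2 \<and> 0 < kp \<and> kp < n"
    hence "npath (X \<times> UNIV) ?N2 q" "p = fst \<circ> q" "n = m" "0 < kp" "kp < n" by auto
    thus "\<exists>kq. 0 < kq \<and> kq < m \<and> (p kp, q kq) \<in> ?ZN"
      using c9' by (intro exI[of _ kp]) auto
  qed
  show ?thesis unfolding pp_bisim_def using c0 c1 c2 c3 c4 c5 c6 c7 c8 c9 by blast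
qed

theorem proposition20:
  assumes "uncountable (UNIV :: 'a set)"
  shows "\<not> (\<exists>\<phi>. \<forall>(X :: 'a set) Nb V. topological_nbh X Nb \<longrightarrow>
              (T1_sep X Nb \<longleftrightarrow> (\<forall>x\<in>X. x \<in> sem X Nb V \<phi>)))
     \<and> (\<forall>(X :: 'a set) (V1 :: 'a \<Rightarrow> nat set). uncountable X \<longrightarrow>
          topological_nbh X (ccc_nbh X) \<and>
          topological_nbh (X \<times> UNIV) (dccc_nbh X) \<and>
          (\<exists>Z1 Z2. pp_bisim X (ccc_nbh X) V1 (X \<times> UNIV) (dccc_nbh X) (\<lambda>(x,b). V1 x)
                     {(x, (x, b)) | x b. x \<in> X} Z1 Z2) \<and>
          T1_sep X (ccc_nbh X) \<and> \<not> T1_sep (X \<times> UNIV) (dccc_nbh X))"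
proof (intro conjI allI impI)
  have "\<exists>a b :: 'a. a \<noteq> b"
  proof (rule ccontr)
    assume "\<not> (\<exists>a b :: 'a. a \<noteq> b)"
    hence "UNIV = {undefined :: 'a}" by blast
    hence "finite (UNIV :: 'a set)" by (metis finite.emptyI finite_insert)
    thus False using assms countable_finite by blast
  qed
  then obtain a b :: 'a where "a \<noteq> b" by blast
  thus "\<not> (\<exists>\<phi>. \<forall>(X :: 'a set) Nb V. topological_nbh X Nb \<longrightarrow>
              (T1_sep X Nb \<longleftrightarrow> (\<forall>x\<in>X. x \<in> sem X Nb V \<phi>)))" by (rule part1)
next
  fix X :: "'a set" and V1 :: "'a \<Rightarrow> nat set"
  assume u: "uncountable X"
  have ne: "X \<noteq> {}" using u countable_empty by metis
  show "topological_nbh X (ccc_nbh X)" by (rule top_ccc)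
  show "topological_nbh (X \<times> UNIV) (dccc_nbh X)" by (rule top_dccc)
  show "\<exists>Z1 Z2. pp_bisim X (ccc_nbh X) V1 (X \<times> UNIV) (dccc_nbh X) (\<lambda>(x,b). V1 x)
                     {(x, (x, b)) | x b. x \<in> X} Z1 Z2" by (rule exI, rule exI, rule bisim[OF ne])
  show "T1_sep X (ccc_nbh X)" by (rule T1_ccc)
  show "\<not> T1_sep (X \<times> UNIV) (dccc_nbh X)" using nT1_dccc[OF ne] .
qed

end
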